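(* Let $d,f\in\mathbb{C}$ with $f\neq 0$, and let $\tau_1:T_4\to\mathrm{GL}_5(\mathbb{C})$ be defined by $\tau_1(s_i)=\mathrm{diag}(I_{i-1},M_1,I_{3-i})$ for $1\leq i\leq 3$, where $M_1=\begin{pmatrix}1&0&0\\ d&-1&f\\ 0&0&1\end{pmatrix}$. Then $\tau_1$ has a composition factor $\tau_1^{(1)}:T_4\to\mathrm{GL}_3(\mathbb{C})$ given by $$\tau_1^{(1)}(s_1)=\begin{pmatrix}-1&f&0\\ 0&1&0\\ 0&0&1\end{pmatrix},\quad \tau_1^{(1)}(s_2)=\begin{pmatrix}1&0&0\\ d&-1&f\\ 0&0&1\end{pmatrix},\quad \tau_1^{(1)}(s_3)=\begin{pmatrix}1&0&0\\ 0&1&0\\ 0&d&-1\end{pmatrix}.$$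
   Context: The twin group $T_4$ is the group with generators $s_1,s_2,s_3$ and defining relations $s_i^2=1$ for $1\leq i\leq 3$ and $s_1s_3=s_3s_1$. $\mathrm{diag}(A,B,C)$ denotes a block-diagonal matrix and $I_r$ the $r\times r$ identity matrix ($I_0$ empty). A composition factor means a subquotient representation (quotient of an invariant subspace by a smaller invariant subspace). *)

theory Defs
  imports "Jordan_Normal_Form.Matrix"
begin

definition M1 :: "complex \<Rightarrow> complex \<Rightarrow> complex mat" where
  "M1 d f = mat_of_rows_list 3 [[1, 0, 0], [d, -1, f], [0, 0, 1]]"

text \<open>diag(I_{i-1}, M, I_{3-i}) as a 5x5 matrix (0-based row/column indices),
  for i in {1,2,3} and M a 3x3 matrix.\<close>
definition blockdiag5 :: "nat \<Rightarrow> complex mat \<Rightarrow> complex mat" where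
  "blockdiag5 i M = mat 5 5 (\<lambda>(r, c).
     if i - 1 \<le> r \<and> r \<le> i + 1 \<and> i - 1 \<le> c \<and> c \<le> i + 1
     then M $$ (r - (i - 1), c - (i - 1))
     else (if r = c then 1 else 0))"

definition tau1 :: "complex \<Rightarrow> complex \<Rightarrow> nat \<Rightarrow> complex mat" where
  "tau1 d f i = blockdiag5 i (M1 d f)"

definition tau1_1 :: "complex \<Rightarrow> complex \<Rightarrow> nat \<Rightarrow> complex mat" where
  "tau1_1 d f i =
    (if i = 1 then mat_of_rows_list 3 [[-1, f, 0], [0, 1, 0], [0, 0, 1]]
     else if i = 2 then mat_of_rows_list 3 [[1, 0, 0], [d, -1, f], [0, 0, 1]]
     else mat_of_rows_list 3 [[1, 0, 0], [0, 1, 0], [0, d, -1]])"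

definition csubspace :: "nat \<Rightarrow> complex vec set \<Rightarrow> bool" where
  "csubspace n V \<longleftrightarrow> V \<subseteq> carrier_vec n \<and> 0\<^sub>v n \<in> V \<and>
     (\<forall>x\<in>V. \<forall>y\<in>V. x + y \<in> V) \<and> (\<forall>c. \<forall>x\<in>V. c \<cdot>\<^sub>v x \<in> V)"

text \<open>Subspace invariant under all tau_1(s_i), i.e. a subrepresentation of tau_1
  (the s_i generate T_4).\<close>
definition tau1_invariant :: "complex \<Rightarrow> complex \<Rightarrow> complex vec set \<Rightarrow> bool" where
  "tau1_invariant d f V \<longleftrightarrow> (\<forall>i\<in>{1,2,3::nat}. \<forall>v\<in>V. tau1 d f i *\<^sub>v v \<in> V)"

definition lincomb3 :: "complex \<Rightarrow> complex \<Rightarrow> complex \<Rightarrow> complex vec \<Rightarrow> complex vec \<Rightarrow> complex vec \<Rightarrow> complex vec" where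
  "lincomb3 c1 c2 c3 b1 b2 b3 = c1 \<cdot>\<^sub>v b1 + c2 \<cdot>\<^sub>v b2 + c3 \<cdot>\<^sub>v b3"

text \<open>tau_1 has a composition factor V/W (W \<subseteq> V invariant subspaces) such that,
  w.r.t. the basis b1+W, b2+W, b3+W of V/W, the induced action of s_i has matrix A i
  (acting on coordinate column vectors: s_i(b_j) = sum_k (A i)_{kj} b_k mod W).\<close>
definition has_composition_factor :: "complex \<Rightarrow> complex \<Rightarrow> (nat \<Rightarrow> complex mat) \<Rightarrow> bool" where
  "has_composition_factor d f A \<longleftrightarrow>
    (\<exists>V W b1 b2 b3.
       csubspace 5 V \<and> csubspace 5 W \<and> W \<subseteq> V \<and>
       tau1_invariant d f V \<and> tau1_invariant d f W \<and>
       b1 \<in> V \<and> b2 \<in> V \<and> b3 \<in> V \<and>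
       (\<forall>c1 c2 c3. lincomb3 c1 c2 c3 b1 b2 b3 \<in> W \<longrightarrow> c1 = 0 \<and> c2 = 0 \<and> c3 = 0) \<and>
       (\<forall>v\<in>V. \<exists>c1 c2 c3. v - lincomb3 c1 c2 c3 b1 b2 b3 \<in> W) \<and>
       (\<forall>i\<in>{1,2,3::nat}.
          tau1 d f i *\<^sub>v b1 - lincomb3 (A i $$ (0,0)) (A i $$ (1,0)) (A i $$ (2,0)) b1 b2 b3 \<in> W \<and>
          tau1 d f i *\<^sub>v b2 - lincomb3 (A i $$ (0,1)) (A i $$ (1,1)) (A i $$ (2,1)) b1 b2 b3 \<in> W \<and>
          tau1 d f i *\<^sub>v b3 - lincomb3 (A i $$ (0,2)) (A i $$ (1,2)) (A i $$ (2,2)) b1 b2 b3 \<in> W))"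

end

theory Submission
  imports Defs
begin

lemma sum5: "(\<Sum>c<(5::nat). g c) = g 0 + g 1 + g 2 + g 3 + (g 4 :: complex)"
  by (simp add: eval_nat_numeral)

lemma mv: "v \<in> carrier_vec 5 \<Longrightarrow> r < 5 \<Longrightarrow>
  (tau1 d f i *\<^sub>v v) $ r = (\<Sum>c<5. tau1 d f i $$ (r,c) * v $ c)"
  unfolding tau1_def blockdiag5_def
  by (simp add: mult_mat_vec_def scalar_prod_def atLeast0LessThan mult.commute)

lemma r5: "r < (5::nat) \<Longrightarrow> r = 0 \<or> r = 1 \<or> r = 2 \<or> r = 3 \<or> r = 4" by auto

lemma mvc: "v \<in> carrier_vec 5 \<Longrightarrow> r < 5 \<Longrightarrow> i \<in> {1,2,3} \<Longrightarrow>
  (tau1 d f i *\<^sub>v v) $ r = (if r = i then d * v$(i-1) - v$i + f * v$(i+1) else v$r)"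
  apply (simp only: mv sum5)
  apply (simp add: tau1_def blockdiag5_def M1_def mat_of_rows_list_def)
  apply (drule r5)
  apply (elim disjE; simp add: eval_nat_numeral)
  done

lemma mvs: "v \<in> carrier_vec 5 \<Longrightarrow> tau1 d f i *\<^sub>v v \<in> carrier_vec 5"
  unfolding tau1_def blockdiag5_def by (rule mult_mat_vec_carrier) auto

abbreviation "bb k \<equiv> unit_vec 5 k :: complex vec"

lemma lc_car: "lincomb3 c1 c2 c3 (bb a) (bb b) (bb c) \<in> carrier_vec 5"
  unfolding lincomb3_def by simp

lemma lc_dim[simp]: "dim_vec (lincomb3 c1 c2 c3 (bb a) (bb b) (bb c)) = 5"
  unfolding lincomb3_def by simp

lemma lc: "r < 5 \<Longrightarrow> (lincomb3 c1 c2 c3 (bb 1) (bb 2) (bb 3)) $ r =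
   (if r = 1 then c1 else if r = 2 then c2 else if r = 3 then c3 else 0)"
  unfolding lincomb3_def by (simp add: unit_vec_def)

lemma zeroI: "x \<in> carrier_vec 5 \<Longrightarrow> (\<And>r. r < 5 \<Longrightarrow> x $ r = 0) \<Longrightarrow> x = 0\<^sub>v 5"
  by (rule eq_vecI) auto

lemma act: "i \<in> {1,2,3} \<Longrightarrow> (j,k) \<in> {(0,1),(1,2),(2,3::nat)} \<Longrightarrow>
  tau1 d f i *\<^sub>v bb k - lincomb3 (tau1_1 d f i $$ (0,j)) (tau1_1 d f i $$ (1,j)) (tau1_1 d f i $$ (2,j)) (bb 1) (bb 2) (bb 3) = 0\<^sub>v 5"
proof (rule zeroI)
  assume "(j,k) \<in> {(0,1),(1,2),(2,3::nat)}"
  then have k: "k < 5" by auto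
  show "tau1 d f i *\<^sub>v bb k - lincomb3 (tau1_1 d f i $$ (0,j)) (tau1_1 d f i $$ (1,j)) (tau1_1 d f i $$ (2,j)) (bb 1) (bb 2) (bb 3) \<in> carrier_vec 5"
    using mvs[of "bb k" d f i] lc_car by simp
next
  fix r :: nat assume r: "r < 5" and i: "i \<in> {1,2,3}" and jk: "(j,k) \<in> {(0,1),(1,2),(2,3::nat)}"
  have c: "bb k \<in> carrier_vec 5" by simp
  show "(tau1 d f i *\<^sub>v bb k - lincomb3 (tau1_1 d f i $$ (0,j)) (tau1_1 d f i $$ (1,j)) (tau1_1 d f i $$ (2,j)) (bb 1) (bb 2) (bb 3)) $ r = 0"
    apply (subst index_minus_vec)
    using r lc_car[of _ _ _ 1 2 3] apply simp
    using r lc_car[of _ _ _ 1 2 3] mvs[OF c] apply simp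
    apply (simp add: mvc[OF c r i])
    apply (insert r5[OF r] i jk)
    apply (simp only: insert_iff empty_iff prod.inject)
    apply (elim disjE conjE)
    apply (simp_all add: lincomb3_def unit_vec_def tau1_1_def mat_of_rows_list_def)
    done
qed

theorem theorem3p3:
  fixes d f :: complex
  assumes "f \<noteq> 0"
  shows "has_composition_factor d f (tau1_1 d f)"
proof -
  define V where "V = {v \<in> carrier_vec 5. v $ 0 = (0::complex) \<and> v $ 4 = 0}"
  define W where "W = {0\<^sub>v 5 :: complex vec}"
  have cV: "csubspace 5 V" unfolding csubspace_def V_def by auto
  have cW: "csubspace 5 W" unfolding csubspace_def W_def by auto
  have WV: "W \<subseteq> V" unfolding W_def V_def by auto
  have iV: "tau1_invariant d f V" unfolding tau1_invariant_def
  proof (intro ballI)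
    fix i v assume i: "i \<in> {1,2,3::nat}" and v: "v \<in> V"
    then show "tau1 d f i *\<^sub>v v \<in> V" unfolding V_def
      using mvc[of v 0 i d f] mvc[of v 4 i d f] mvs[of v d f i] by auto
  qed
  have iW: "tau1_invariant d f W" unfolding tau1_invariant_def W_def
  proof (intro ballI)
    fix i v assume i: "i \<in> {1,2,3::nat}" and v: "v \<in> {0\<^sub>v 5 :: complex vec}"
    then show "tau1 d f i *\<^sub>v v \<in> {0\<^sub>v 5}" unfolding tau1_def blockdiag5_def by auto
  qed
  have bV: "bb 1 \<in> V" "bb 2 \<in> V" "bb 3 \<in> V" unfolding V_def by auto
  have ind: "\<forall>c1 c2 c3. lincomb3 c1 c2 c3 (bb 1) (bb 2) (bb 3) \<in> W \<longrightarrow> c1 = 0 \<and> c2 = 0 \<and> c3 = 0"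
  proof (intro allI impI)
    fix c1 c2 c3 assume "lincomb3 c1 c2 c3 (bb 1) (bb 2) (bb 3) \<in> W"
    then have e: "lincomb3 c1 c2 c3 (bb 1) (bb 2) (bb 3) = 0\<^sub>v 5" unfolding W_def by auto
    show "c1 = 0 \<and> c2 = 0 \<and> c3 = 0"
      using arg_cong[OF e, of "\<lambda>x. x $ 1"] arg_cong[OF e, of "\<lambda>x. x $ 2"] arg_cong[OF e, of "\<lambda>x. x $ 3"]
      using lc[of 1 c1 c2 c3] lc[of 2 c1 c2 c3] lc[of 3 c1 c2 c3] by simp
  qed
  have span: "\<forall>v\<in>V. \<exists>c1 c2 c3. v - lincomb3 c1 c2 c3 (bb 1) (bb 2) (bb 3) \<in> W"
  proof
    fix v assume v: "v \<in> V"
    have "v - lincomb3 (v$1) (v$2) (v$3) (bb 1) (bb 2) (bb 3) = 0\<^sub>v 5"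
    proof (rule zeroI)
      show "v - lincomb3 (v$1) (v$2) (v$3) (bb 1) (bb 2) (bb 3) \<in> carrier_vec 5"
        using v lc_car unfolding V_def by auto
    next
      fix r :: nat assume r: "r < 5"
      then show "(v - lincomb3 (v$1) (v$2) (v$3) (bb 1) (bb 2) (bb 3)) $ r = 0"
        using v lc_car[of "v$1" "v$2" "v$3"] unfolding V_def
        apply (simp add: lincomb3_def unit_vec_def)
        apply (drule r5)
        apply (elim disjE; simp add: lincomb3_def unit_vec_def)
        done
    qed
    then show "\<exists>c1 c2 c3. v - lincomb3 c1 c2 c3 (bb 1) (bb 2) (bb 3) \<in> W"
      unfolding W_def by blast
  qed
  have acts: "\<forall>i\<in>{1,2,3::nat}.
          tau1 d f i *\<^sub>v bb 1 - lincomb3 (tau1_1 d f i $$ (0,0)) (tau1_1 d f i $$ (1,0)) (tau1_1 d f i $$ (2,0)) (bb 1) (bb 2) (bb 3) \<in> W \<and>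
          tau1 d f i *\<^sub>v bb 2 - lincomb3 (tau1_1 d f i $$ (0,1)) (tau1_1 d f i $$ (1,1)) (tau1_1 d f i $$ (2,1)) (bb 1) (bb 2) (bb 3) \<in> W \<and>
          tau1 d f i *\<^sub>v bb 3 - lincomb3 (tau1_1 d f i $$ (0,2)) (tau1_1 d f i $$ (1,2)) (tau1_1 d f i $$ (2,2)) (bb 1) (bb 2) (bb 3) \<in> W"
    unfolding W_def using act[of _ 0 1 d f] act[of _ 1 2 d f] act[of _ 2 3 d f] by simp
  show ?thesis unfolding has_composition_factor_def
    using cV cW WV iV iW bV ind span acts by blast
qed

end
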